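(* Let $A\in\mathcal E_n$ be nonzero with $\operatorname{rk}(A)=\operatorname{st}_+(A)=r$, Perron eigenvalue $\lambda_1$ and normalised Perron eigenvector $u$. Suppose $$A=U(\lambda_1\oplus D_1)U^T=BCB^T,$$ where $D_1$ is an $(r-1)\times(r-1)$ diagonal matrix with nonzero diagonal entries, $U=\begin{pmatrix}u&U_1\end{pmatrix}\in\mathbb R^{n\times r}$ with $U^TU=I_r$, $B\in\mathbb R_+^{n\times r}$, and $C\in\mathbb R_+^{r\times r}$ is symmetric. Then there exists an invertible $T\in\mathbb R^{r\times r}$ whose first column is entrywise nonnegative and such that the first row of $T^{-1}$ is entrywise nonnegative, with $B=UT^{-1}$ and $C=T(\lambda_1\oplus D_1)T^T$. If moreover $A$ is irreducible, then the first column of $T$ and the first row of $T^{-1}$ are entrywise positive.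
   Context: $\mathcal S_n^+$ is the set of $n\times n$ symmetric entrywise nonnegative real matrices; $\mathbb R_+^{p\times q}$ the entrywise nonnegative $p\times q$ real matrices. The SNT-rank $\operatorname{st}_+(A)$ of $A\in\mathcal S_n^+$ is the minimal $k$ such that $A=BCB^T$ with $B\in\mathbb R_+^{n\times k}$ and $C\in\mathcal S_k^+$. $\mathcal E_n=\{A\in\mathcal S_n^+:\operatorname{rk}(A)=\operatorname{st}_+(A)\}$. The Perron eigenvalue is the spectral radius $\lambda_1$ of $A$, and a normalised Perron eigenvector is an entrywise nonnegative eigenvector $u$ for $\lambda_1$ with $u^Tu=1$. For matrices $X,Y$, $X\oplus Y=\begin{pmatrix}X&0\\0&Y\end{pmatrix}$. *)

theory Defs
  imports "Jordan_Normal_Form.Spectral_Radius" "Jordan_Normal_Form.DL_Rank"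
begin

definition nonneg_mat :: "real mat \<Rightarrow> bool" where
  "nonneg_mat M \<longleftrightarrow> (\<forall>i < dim_row M. \<forall>j < dim_col M. M $$ (i,j) \<ge> 0)"

definition nonneg_vec :: "real vec \<Rightarrow> bool" where
  "nonneg_vec v \<longleftrightarrow> (\<forall>i < dim_vec v. v $ i \<ge> 0)"

definition pos_vec :: "real vec \<Rightarrow> bool" where
  "pos_vec v \<longleftrightarrow> (\<forall>i < dim_vec v. v $ i > 0)"

definition SNN :: "nat \<Rightarrow> real mat set" where
  "SNN n = {A. A \<in> carrier_mat n n \<and> A\<^sup>T = A \<and> nonneg_mat A}"

definition mat_rank :: "nat \<Rightarrow> real mat \<Rightarrow> nat" where
  "mat_rank n A = vec_space.rank n A"

definition snt_rank :: "nat \<Rightarrow> real mat \<Rightarrow> nat" where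
  "snt_rank n A = (LEAST k. \<exists>B C. B \<in> carrier_mat n k \<and> nonneg_mat B \<and> C \<in> SNN k
       \<and> A = B * C * B\<^sup>T)"

definition E_set :: "nat \<Rightarrow> real mat set" where
  "E_set n = {A \<in> SNN n. mat_rank n A = snt_rank n A}"

definition perron_eigenvalue :: "real mat \<Rightarrow> real" where
  "perron_eigenvalue A = spectral_radius (map_mat complex_of_real A)"

definition normalised_perron_eigenvector :: "nat \<Rightarrow> real mat \<Rightarrow> real vec \<Rightarrow> bool" where
  "normalised_perron_eigenvector n A u \<longleftrightarrow> u \<in> carrier_vec n \<and> nonneg_vec u
      \<and> A *\<^sub>v u = perron_eigenvalue A \<cdot>\<^sub>v u \<and> u \<bullet> u = 1"

definition dsum_mat :: "real mat \<Rightarrow> real mat \<Rightarrow> real mat" where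
  "dsum_mat X Y = four_block_mat X (0\<^sub>m (dim_row X) (dim_col Y)) (0\<^sub>m (dim_row Y) (dim_col X)) Y"

definition scalar_mat :: "real \<Rightarrow> real mat" where
  "scalar_mat a = mat 1 1 (\<lambda>_. a)"

text \<open>For n = 1 we use the convention that the matrix must be nonzero.\<close>
definition irreducible_mat :: "nat \<Rightarrow> real mat \<Rightarrow> bool" where
  "irreducible_mat n A \<longleftrightarrow> A \<noteq> 0\<^sub>m n n \<and>
     (\<forall>S. S \<subseteq> {..<n} \<and> S \<noteq> {} \<and> S \<noteq> {..<n} \<longrightarrow>
        (\<exists>i\<in>S. \<exists>j\<in>{..<n} - S. A $$ (i,j) \<noteq> 0))"

end

theory Submission
  imports Defs
begin

lemma rank_sum_rank1:
  fixes f g :: "nat \<Rightarrow> nat \<Rightarrow> real"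
  shows "vec_space.rank n (mat n n (\<lambda>(i,j). \<Sum>k<m. f k i * g k j)) \<le> m"
proof (induction m)
  case 0
  have "mat n n (\<lambda>(i,j). \<Sum>k<(0::nat). f k i * g k j) = 0\<^sub>m n n"
    by (rule eq_matI) auto
  then show ?case using vec_space.rank_0I by (metis le_refl)
next
  case (Suc m)
  have eq: "mat n n (\<lambda>(i,j). \<Sum>k<Suc m. f k i * g k j)
     = mat n n (\<lambda>(i,j). \<Sum>k<m. f k i * g k j) + mat n n (\<lambda>(i,j). f m i * g m j)"
    by (rule eq_matI) auto
  have r1: "vec_space.rank n (mat n n (\<lambda>(i,j). f m i * g m j)) \<le> 1"
    by (rule vec_space.rank_le_1_product_entries[where f="f m" and g="g m" and nc=n]) auto
  have "vec_space.rank n (mat n n (\<lambda>(i,j). \<Sum>k<Suc m. f k i * g k j))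
     \<le> vec_space.rank n (mat n n (\<lambda>(i,j). \<Sum>k<m. f k i * g k j)) + vec_space.rank n (mat n n (\<lambda>(i,j). f m i * g m j))"
    unfolding eq by (rule vec_space.rank_subadditive) auto
  then show ?case using Suc r1 by linarith
qed

lemma det_inv_ex:
  fixes A :: "real mat"
  assumes "A \<in> carrier_mat n n" "det A \<noteq> 0"
  shows "\<exists>B. B \<in> carrier_mat n n \<and> A * B = 1\<^sub>m n \<and> B * A = 1\<^sub>m n"
  using det_non_zero_imp_unit[OF assms, of undefined]
  unfolding Units_def ring_mat_def by auto

theorem mainTheorem10:
  fixes n r :: nat and A U U1 D1 B C :: "real mat" and u :: "real vec"
  assumes A_E: "A \<in> E_set n"
    and A_nz: "A \<noteq> 0\<^sub>m n n"
    and rk: "mat_rank n A = r" and st: "snt_rank n A = r"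
    and u_perron: "normalised_perron_eigenvector n A u"
    and D1_dim: "D1 \<in> carrier_mat (r - 1) (r - 1)"
    and D1_diag: "diagonal_mat D1"
    and D1_nz: "\<forall>i < r - 1. D1 $$ (i,i) \<noteq> 0"
    and U1_dim: "U1 \<in> carrier_mat n (r - 1)"
    and U_def: "U = mat_of_cols n (u # cols U1)"
    and U_orth: "U\<^sup>T * U = 1\<^sub>m r"
    and A_U: "A = U * dsum_mat (scalar_mat (perron_eigenvalue A)) D1 * U\<^sup>T"
    and B_dim: "B \<in> carrier_mat n r" and B_nn: "nonneg_mat B"
    and C_dim: "C \<in> carrier_mat r r" and C_nn: "nonneg_mat C" and C_sym: "C\<^sup>T = C"
    and A_BC: "A = B * C * B\<^sup>T"
  shows "\<exists>T Tinv. T \<in> carrier_mat r r \<and> Tinv \<in> carrier_mat r r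
           \<and> T * Tinv = 1\<^sub>m r \<and> Tinv * T = 1\<^sub>m r
           \<and> nonneg_vec (col T 0) \<and> nonneg_vec (row Tinv 0)
           \<and> B = U * Tinv
           \<and> C = T * dsum_mat (scalar_mat (perron_eigenvalue A)) D1 * T\<^sup>T
           \<and> (irreducible_mat n A \<longrightarrow> pos_vec (col T 0) \<and> pos_vec (row Tinv 0))"
proof -
  define lam where "lam = perron_eigenvalue A"
  define L where "L = dsum_mat (scalar_mat lam) D1"
  have u_car: "u \<in> carrier_vec n" and u_nn: "nonneg_vec u" and Au: "A *\<^sub>v u = lam \<cdot>\<^sub>v u"
    and uu: "u \<bullet> u = 1"
    using u_perron unfolding normalised_perron_eigenvector_def lam_def by auto
  have dcU: "dim_col U = Suc (r - 1)" using U_def U1_dim by simp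
  have "dim_col U = r" using arg_cong[OF U_orth, of dim_col] by simp
  hence r1: "r \<ge> 1" and U_car: "U \<in> carrier_mat n r" using dcU U_def by auto
  have A_car: "A \<in> carrier_mat n n" using A_E unfolding E_set_def SNN_def by auto
  have L_car: "L \<in> carrier_mat r r" using r1 D1_dim unfolding L_def dsum_mat_def scalar_mat_def by auto
  have L_ent: "L $$ (i,j) = (if i = j then (if i = 0 then lam else D1 $$ (i-1,i-1)) else 0)"
    if "i < r" "j < r" for i j
    using that r1 D1_dim D1_diag unfolding L_def dsum_mat_def scalar_mat_def diagonal_mat_def
    by auto
  have U0: "U $$ (i,0) = u $ i" if "i < n" for i
    using that U_def by (simp add: mat_of_cols_index)
  have A_nn: "nonneg_mat A" using A_E unfolding E_set_def SNN_def by auto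
  have AUL: "A = U * L * U\<^sup>T" unfolding L_def lam_def by (rule A_U)
  have UL_ent: "(U * L) $$ (i,l) = U $$ (i,l) * L $$ (l,l)" if "i < n" "l < r" for i l
  proof -
    have "(U * L) $$ (i,l) = (\<Sum>k \<in> {0..<r}. U $$ (i,k) * L $$ (k,l))"
      using that U_car L_car by (simp add: scalar_prod_def)
    also have "\<dots> = (\<Sum>k \<in> {0..<r}. if k = l then U $$ (i,l) * L $$ (l,l) else 0)"
      by (rule sum.cong) (use that L_ent in auto)
    also have "\<dots> = U $$ (i,l) * L $$ (l,l)" using that by simp
    finally show ?thesis .
  qed
  have A_ent: "A $$ (i,j) = (\<Sum>l<r. U $$ (i,l) * L $$ (l,l) * U $$ (j,l))" if "i < n" "j < n" for i j
  proof -
    have "(U * L * U\<^sup>T) $$ (i,j) = row (U * L) i \<bullet> col U\<^sup>T j"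
      using that U_car L_car by (intro index_mult_mat(1)) auto
    also have "\<dots> = (\<Sum>l \<in> {0..<r}. (U * L) $$ (i,l) * U $$ (j,l))"
      using that U_car L_car unfolding scalar_prod_def by (auto intro!: sum.cong)
    finally have "(U * L * U\<^sup>T) $$ (i,j) = (\<Sum>l \<in> {0..<r}. (U * L) $$ (i,l) * U $$ (j,l))" .
    hence "A $$ (i,j) = (\<Sum>l \<in> {0..<r}. (U * L) $$ (i,l) * U $$ (j,l))" using AUL by simp
    also have "\<dots> = (\<Sum>l<r. U $$ (i,l) * L $$ (l,l) * U $$ (j,l))"
      using that UL_ent by (auto simp: lessThan_atLeast0 intro!: sum.cong)
    finally show ?thesis .
  qed
  have lam_ge: "lam \<ge> 0"
  proof -
    have "u \<bullet> (A *\<^sub>v u) = lam * (u \<bullet> u)" unfolding Au using u_car by simp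
    hence e: "u \<bullet> (A *\<^sub>v u) = lam" using uu by simp
    have "u \<bullet> (A *\<^sub>v u) \<ge> 0"
      using A_car u_car u_nn A_nn unfolding scalar_prod_def nonneg_vec_def nonneg_mat_def
      by (auto intro!: sum_nonneg mult_nonneg_nonneg simp: scalar_prod_def)
    thus ?thesis using e by simp
  qed
  have lam_nz: "lam \<noteq> 0"
  proof
    assume l0: "lam = 0"
    have "A = mat n n (\<lambda>(i,j). \<Sum>k<r-1. (U $$ (i, Suc k) * D1 $$ (k,k)) * U $$ (j, Suc k))"
    proof (rule eq_matI)
      fix i j assume ij: "i < dim_row (mat n n (\<lambda>(i,j). \<Sum>k<r-1. (U $$ (i, Suc k) * D1 $$ (k,k)) * U $$ (j, Suc k)))"
        "j < dim_col (mat n n (\<lambda>(i,j). \<Sum>k<r-1. (U $$ (i, Suc k) * D1 $$ (k,k)) * U $$ (j, Suc k)))"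
      hence ij': "i < n" "j < n" by auto
      obtain m where rm: "r = Suc m" using r1 by (cases r) auto
      have L00: "L $$ (0,0) = 0" using L_ent[of 0 0] l0 rm by simp
      have Lk: "L $$ (Suc k, Suc k) = D1 $$ (k,k)" if "k < m" for k using L_ent[of "Suc k" "Suc k"] that rm by simp
      have "A $$ (i,j) = (\<Sum>l<Suc m. U $$ (i,l) * L $$ (l,l) * U $$ (j,l))"
        using A_ent[OF ij'] rm by simp
      also have "\<dots> = (\<Sum>k<m. (U $$ (i, Suc k) * D1 $$ (k,k)) * U $$ (j, Suc k))"
        unfolding sum.lessThan_Suc_shift L00 using Lk by simp
      also have "\<dots> = (\<Sum>k<r-1. (U $$ (i, Suc k) * D1 $$ (k,k)) * U $$ (j, Suc k))" using rm by simp
      finally show "A $$ (i,j) = mat n n (\<lambda>(i,j). \<Sum>k<r-1. (U $$ (i, Suc k) * D1 $$ (k,k)) * U $$ (j, Suc k)) $$ (i,j)"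
        using ij' by simp
    qed (use A_car in auto)
    hence "vec_space.rank n A \<le> r - 1"
      using rank_sum_rank1[of n "\<lambda>k i. U $$ (i, Suc k) * D1 $$ (k,k)" "\<lambda>k j. U $$ (j, Suc k)" "r - 1"] by simp
    thus False using rk r1 unfolding mat_rank_def by simp
  qed
  have Ut_car: "U\<^sup>T \<in> carrier_mat r n" using U_car by simp
  define S where "S = U\<^sup>T * B"
  have S_car: "S \<in> carrier_mat r r" unfolding S_def using U_car B_dim by simp
  have St: "S\<^sup>T = B\<^sup>T * U" unfolding S_def using U_car B_dim by (simp add: transpose_mult)
  have UtUX: "U\<^sup>T * (U * X) = X" if "X \<in> carrier_mat r k" for X k
  proof -
    have "U\<^sup>T * (U * X) = (U\<^sup>T * U) * X" using that U_car by (simp add: assoc_mult_mat)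
    thus ?thesis using U_orth that by simp
  qed
  have Bt_car: "B\<^sup>T \<in> carrier_mat r n" using B_dim by simp
  have St_car: "S\<^sup>T \<in> carrier_mat r r" using S_car by simp
  have AU1: "A * U = U * L"
  proof -
    have "A * U = (U * L) * (U\<^sup>T * U)" unfolding AUL
      by (rule assoc_mult_mat[OF mult_carrier_mat[OF U_car L_car] Ut_car U_car])
    thus ?thesis using U_orth L_car U_car by simp
  qed
  have AU2: "A * U = B * (C * S\<^sup>T)"
  proof -
    have "A * U = (B * C) * (B\<^sup>T * U)" unfolding A_BC
      by (rule assoc_mult_mat[OF mult_carrier_mat[OF B_dim C_dim] Bt_car U_car])
    also have "\<dots> = B * (C * S\<^sup>T)" unfolding St[symmetric]
      by (rule assoc_mult_mat[OF B_dim C_dim St_car])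
    finally show ?thesis .
  qed
  have L_eq: "L = S * (C * S\<^sup>T)"
  proof -
    have "U\<^sup>T * (U * L) = U\<^sup>T * (B * (C * S\<^sup>T))" using AU1 AU2 by simp
    also have "\<dots> = (U\<^sup>T * B) * (C * S\<^sup>T)"
      by (rule assoc_mult_mat[symmetric, OF Ut_car B_dim mult_carrier_mat[OF C_dim St_car]])
    also have "\<dots> = S * (C * S\<^sup>T)" unfolding S_def ..
    finally show ?thesis using UtUX[OF L_car] by simp
  qed
  have detL: "det L \<noteq> 0"
  proof -
    have ut: "upper_triangular L" using L_car L_ent unfolding upper_triangular_def by auto
    have "det L = prod_list (diag_mat L)" by (rule det_upper_triangular[OF ut L_car])
    moreover have "0 \<notin> set (diag_mat L)"
      using L_car L_ent lam_nz D1_nz unfolding diag_mat_def by (auto simp: in_set_conv_nth)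
    ultimately show ?thesis by (simp add: prod_list_zero_iff)
  qed
  have "det L = det S * (det C * det S)"
    unfolding L_eq using S_car C_dim by (simp add: det_mult det_transpose)
  hence dS: "det S \<noteq> 0" and dC: "det C \<noteq> 0" using detL by auto
  obtain T where T_car: "T \<in> carrier_mat r r" and ST1: "S * T = 1\<^sub>m r" and TS1: "T * S = 1\<^sub>m r"
    using det_inv_ex[OF S_car dS] by auto
  obtain Ci where Ci_car: "Ci \<in> carrier_mat r r" and CCi: "C * Ci = 1\<^sub>m r"
    using det_inv_ex[OF C_dim dC] by auto
  have Tt_car: "T\<^sup>T \<in> carrier_mat r r" using T_car by simp
  have StTt: "S\<^sup>T * T\<^sup>T = 1\<^sub>m r"
  proof -
    have "(T * S)\<^sup>T = S\<^sup>T * T\<^sup>T" by (rule transpose_mult[OF T_car S_car])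
    thus ?thesis using TS1 by simp
  qed
  have TL: "T * L = C * S\<^sup>T"
  proof -
    have "T * L = (T * S) * (C * S\<^sup>T)" unfolding L_eq
      by (rule assoc_mult_mat[symmetric, OF T_car S_car mult_carrier_mat[OF C_dim St_car]])
    thus ?thesis using TS1 C_dim S_car by simp
  qed
  have C_eq: "C = T * L * T\<^sup>T"
  proof -
    have "T * L * T\<^sup>T = C * (S\<^sup>T * T\<^sup>T)" unfolding TL
      by (rule assoc_mult_mat[OF C_dim St_car Tt_car])
    thus ?thesis using StTt C_dim by simp
  qed
  define X where "X = T\<^sup>T * Ci"
  have X_car: "X \<in> carrier_mat r r" unfolding X_def using T_car Ci_car by simp
  have StX: "S\<^sup>T * X = Ci"
  proof -
    have "S\<^sup>T * X = (S\<^sup>T * T\<^sup>T) * Ci" unfolding X_def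
      by (rule assoc_mult_mat[symmetric, OF St_car Tt_car Ci_car])
    thus ?thesis using StTt Ci_car by simp
  qed
  have Y1: "C * (S\<^sup>T * X) = 1\<^sub>m r" using StX CCi by simp
  have Y2: "C * (S\<^sup>T * X) = (C * S\<^sup>T) * X"
    by (rule assoc_mult_mat[symmetric, OF C_dim St_car X_car])
  have LX: "L * X = S"
  proof -
    have "L * X = S * ((C * S\<^sup>T) * X)" unfolding L_eq
      by (rule assoc_mult_mat[OF S_car mult_carrier_mat[OF C_dim St_car] X_car])
    thus ?thesis using Y1 Y2 S_car by simp
  qed
  have B_eq: "B = U * S"
  proof -
    have "B = B * (C * (S\<^sup>T * X))" using Y1 B_dim by simp
    also have "\<dots> = (B * (C * S\<^sup>T)) * X" unfolding Y2
      by (rule assoc_mult_mat[symmetric, OF B_dim mult_carrier_mat[OF C_dim St_car] X_car])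
    also have "\<dots> = (U * L) * X" using AU1 AU2 by simp
    also have "\<dots> = U * (L * X)" by (rule assoc_mult_mat[OF U_car L_car X_car])
    finally show ?thesis using LX by simp
  qed
  have S0: "S $$ (0,j) = (\<Sum>i<n. u $ i * B $$ (i,j))" if "j < r" for j
  proof -
    have "S $$ (0,j) = row U\<^sup>T 0 \<bullet> col B j" unfolding S_def using that r1 U_car B_dim
      by (intro index_mult_mat(1)) auto
    also have "\<dots> = (\<Sum>i<n. u $ i * B $$ (i,j))"
      unfolding scalar_prod_def using that r1 U_car B_dim U0 by (auto simp: lessThan_atLeast0 intro!: sum.cong)
    finally show ?thesis .
  qed
  have CSt: "(C * S\<^sup>T) $$ (i,0) = (\<Sum>k<r. C $$ (i,k) * S $$ (0,k))" if "i < r" for i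
    using that r1 C_dim S_car by (simp add: scalar_prod_def lessThan_atLeast0)
  have TLe: "(T * L) $$ (i,0) = T $$ (i,0) * lam" if "i < r" for i
  proof -
    have "(T * L) $$ (i,0) = (\<Sum>k \<in> {0..<r}. T $$ (i,k) * L $$ (k,0))"
      using that r1 T_car L_car by (simp add: scalar_prod_def)
    also have "\<dots> = (\<Sum>k \<in> {0..<r}. if k = 0 then T $$ (i,0) * lam else 0)"
      by (rule sum.cong) (use that r1 L_ent in auto)
    also have "\<dots> = T $$ (i,0) * lam" using r1 by simp
    finally show ?thesis .
  qed
  have S0nn: "S $$ (0,j) \<ge> 0" if "j < r" for j
    unfolding S0[OF that] using u_nn B_nn B_dim u_car that unfolding nonneg_vec_def nonneg_mat_def
    by (auto intro!: sum_nonneg)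
  have T0: "T $$ (i,0) = (\<Sum>k<r. C $$ (i,k) * S $$ (0,k)) / lam" if "i < r" for i
    using TLe[OF that] CSt[OF that] TL lam_nz by (simp add: field_simps)
  have T0nn: "T $$ (i,0) \<ge> 0" if "i < r" for i
    unfolding T0[OF that] using lam_ge S0nn C_nn C_dim that unfolding nonneg_mat_def
    by (auto intro!: divide_nonneg_nonneg sum_nonneg)
  have irr: "pos_vec (col T 0) \<and> pos_vec (row S 0)" if irrA: "irreducible_mat n A"
  proof -
    have u_pos: "u $ i > 0" if "i < n" for i
    proof (rule ccontr)
      assume "\<not> u $ i > 0"
      hence ui0: "u $ i = 0" using u_nn u_car that unfolding nonneg_vec_def by force
      define Z where "Z = {k. k < n \<and> u $ k = 0}"
      have Zsub: "Z \<subseteq> {..<n}" unfolding Z_def by auto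
      have Zne: "Z \<noteq> {}" using ui0 that unfolding Z_def by auto
      have Znf: "Z \<noteq> {..<n}"
      proof
        assume "Z = {..<n}"
        hence "\<forall>k<n. u $ k = 0" unfolding Z_def by auto
        hence "u \<bullet> u = 0" using u_car unfolding scalar_prod_def by auto
        thus False using uu by simp
      qed
      obtain a b where a: "a \<in> Z" and b: "b \<in> {..<n} - Z" and Aab: "A $$ (a,b) \<noteq> 0"
        using irrA Zsub Zne Znf unfolding irreducible_mat_def by blast
      have an: "a < n" and ua: "u $ a = 0" using a unfolding Z_def by auto
      have bn: "b < n" and ub: "u $ b > 0" using b u_nn u_car unfolding Z_def nonneg_vec_def
        by (auto simp: order_le_less)
      have "(A *\<^sub>v u) $ a = (\<Sum>k \<in> {0..<n}. A $$ (a,k) * u $ k)"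
        using an A_car u_car by (simp add: scalar_prod_def)
      also have "\<dots> > 0"
      proof (rule sum_pos2[of _ b])
        show "0 < A $$ (a,b) * u $ b" using Aab ub A_nn an bn A_car unfolding nonneg_mat_def
          by (intro mult_pos_pos) (force simp: order_le_less)+
        show "\<And>k. k \<in> {0..<n} \<Longrightarrow> 0 \<le> A $$ (a,k) * u $ k"
          using A_nn A_car u_nn u_car an unfolding nonneg_mat_def nonneg_vec_def by auto
      qed (use bn in auto)
      finally have "(A *\<^sub>v u) $ a > 0" .
      moreover have "(A *\<^sub>v u) $ a = 0" unfolding Au using ua an u_car by simp
      ultimately show False by simp
    qed
    have S0p: "S $$ (0,j) > 0" if "j < r" for j
    proof -
      have "\<exists>i<n. B $$ (i,j) \<noteq> 0"
      proof (rule ccontr)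
        assume "\<not> (\<exists>i<n. B $$ (i,j) \<noteq> 0)"
        hence Bz: "\<forall>i<n. B $$ (i,j) = 0" by auto
        have Sz: "S $$ (k,j) = 0" if "k < r" for k
          unfolding S_def using that \<open>j < r\<close> U_car B_dim Bz by (simp add: scalar_prod_def)
        have "(T * S) $$ (j,j) = 0"
          using \<open>j < r\<close> T_car S_car Sz by (simp add: scalar_prod_def)
        thus False using TS1 \<open>j < r\<close> by simp
      qed
      then obtain i where i: "i < n" "B $$ (i,j) \<noteq> 0" by auto
      show ?thesis unfolding S0[OF that]
      proof (rule sum_pos2[of _ i])
        show "0 < u $ i * B $$ (i,j)" using u_pos[OF i(1)] i B_nn B_dim that unfolding nonneg_mat_def
          by (intro mult_pos_pos) (force simp: order_le_less)+
        show "\<And>k. k \<in> {..<n} \<Longrightarrow> 0 \<le> u $ k * B $$ (k,j)"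
          using u_pos B_nn B_dim that unfolding nonneg_mat_def
          by (intro mult_nonneg_nonneg) (auto intro: less_imp_le)
      qed (use i in auto)
    qed
    have T0p: "T $$ (i,0) > 0" if "i < r" for i
    proof -
      have "\<exists>k<r. C $$ (i,k) \<noteq> 0"
      proof (rule ccontr)
        assume "\<not> (\<exists>k<r. C $$ (i,k) \<noteq> 0)"
        hence "(C * Ci) $$ (i,i) = 0"
          using that C_dim Ci_car by (simp add: scalar_prod_def)
        thus False using CCi that by simp
      qed
      then obtain k where k: "k < r" "C $$ (i,k) \<noteq> 0" by auto
      have "(\<Sum>k<r. C $$ (i,k) * S $$ (0,k)) > 0"
      proof (rule sum_pos2[of _ k])
        show "0 < C $$ (i,k) * S $$ (0,k)" using S0p[OF k(1)] k C_nn C_dim that unfolding nonneg_mat_def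
          by (intro mult_pos_pos) (force simp: order_le_less)+
        show "\<And>l. l \<in> {..<r} \<Longrightarrow> 0 \<le> C $$ (i,l) * S $$ (0,l)"
          using S0nn C_nn C_dim that unfolding nonneg_mat_def by auto
      qed (use k in auto)
      thus ?thesis unfolding T0[OF that] using lam_ge lam_nz by simp
    qed
    show ?thesis using T_car S_car r1 T0p S0p unfolding pos_vec_def by auto
  qed
  show ?thesis
    apply (rule exI[of _ T], rule exI[of _ S])
    using T_car S_car ST1 TS1 B_eq C_eq irr T0nn S0nn r1 unfolding lam_def L_def nonneg_vec_def
    by auto
qed

end
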